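(* Let $0\le f\in L^1[-\pi,\pi]$, $b\in(-\pi,0)\cup(0,\pi)$, let $I=[b,\pi]$ if $b>0$ and $I=[-\pi,b]$ if $b<0$, and let $f_H$ be the polarization of $f$ with respect to $b$. Then: (a) for $x\in I$ and $x'=2b-x$: $u_f(x)+u_f(x')\le u_{f_H}(x)+u_{f_H}(x')$; (b) for $x\in I$ and $x'=2b-x$: $u_f(x)\le u_{f_H}(x')$; (c) if $b>0$ and $x\in[-\pi,b]$ (respectively $b<0$ and $x\in[b,\pi]$), then $u_f(x)\le u_{f_H}(x)$. Moreover, for $b>0$ (resp. $b<0$) the following are equivalent: (i) equality $u_f(x)=u_{f_H}(x)$ holds for some $x\in(-\pi,b]$ (resp. $x\in[b,\pi)$); (ii) it holds for all $x\in(-\pi,b]$ (resp. $x\in[b,\pi)$); (iii) $u_f\equiv u_{f_H}$ on $[-\pi,\pi]$; (iv) $f=f_H$ a.e. on $[-\pi,\pi]$.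
   Context: $G(x,y)=-\frac{xy}{2\pi}-\frac12|x-y|+\frac{\pi}{2}$ on $[-\pi,\pi]^2$; for $0\le g\in L^1[-\pi,\pi]$, $u_g(x)=\int_{-\pi}^{\pi}G(x,y)g(y)\,dy$ (the solution of $-u''=g$ on $(-\pi,\pi)$, $u(\pm\pi)=0$). Polarization of $f$ with respect to $b$: if $b\in(0,\pi)$, $f_H(x)=f(x)$ for $x\in[-\pi,2b-\pi)$, $f_H(x)=\max\{f(x),f(2b-x)\}$ for $x\in[2b-\pi,b]$, $f_H(x)=\min\{f(x),f(2b-x)\}$ for $x\in[b,\pi]$; if $b\in(-\pi,0)$, $f_H(x)=\min\{f(x),f(2b-x)\}$ for $x\in[-\pi,b]$, $f_H(x)=\max\{f(x),f(2b-x)\}$ for $x\in[b,2b+\pi]$, $f_H(x)=f(x)$ for $x\in(2b+\pi,\pi]$. *)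

theory Defs
  imports "HOL-Analysis.Analysis"
begin

definition green :: "real \<Rightarrow> real \<Rightarrow> real" where
  "green x y = - (x * y) / (2 * pi) - \<bar>x - y\<bar> / 2 + pi / 2"

definition upot :: "(real \<Rightarrow> real) \<Rightarrow> real \<Rightarrow> real" where
  "upot g x = (LINT y:{-pi..pi}|lborel. green x y * g y)"

definition polar :: "real \<Rightarrow> (real \<Rightarrow> real) \<Rightarrow> real \<Rightarrow> real" where
  "polar b f x =
    (if 0 < b then
       (if -pi \<le> x \<and> x < 2*b - pi then f x
        else if 2*b - pi \<le> x \<and> x \<le> b then max (f x) (f (2*b - x))
        else if b \<le> x \<and> x \<le> pi then min (f x) (f (2*b - x))
        else f x)
     else if b < 0 then
       (if -pi \<le> x \<and> x \<le> b then min (f x) (f (2*b - x))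
        else if b \<le> x \<and> x \<le> 2*b + pi then max (f x) (f (2*b - x))
        else if 2*b + pi < x \<and> x \<le> pi then f x
        else f x)
     else f x)"

end

theory Submission
  imports Defs
begin



lemma refl_int:
  fixes h :: "real \<Rightarrow> real"
  assumes "set_integrable lborel {c-r..c+r} h"
  shows "set_integrable lborel {c-r..c+r} (\<lambda>y. h (2*c-y))"
    and "(LINT y:{c-r..c+r}|lborel. h (2*c-y)) = (LINT y:{c-r..c+r}|lborel. h y)"
proof -
  let ?k = "\<lambda>x. indicator {c-r..c+r} x *\<^sub>R h x"
  have ik: "integrable lborel ?k" using assms by (simp add: set_integrable_def)
  have eq: "(\<lambda>x. ?k (2*c + (-1) * x)) = (\<lambda>x. indicator {c-r..c+r} x *\<^sub>R h (2*c-x))"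
    by (auto simp: indicator_def fun_eq_iff)
  show "set_integrable lborel {c-r..c+r} (\<lambda>y. h (2*c-y))"
    using lborel_integrable_real_affine[OF ik, of "-1" "2*c"] unfolding set_integrable_def eq by simp
  show "(LINT y:{c-r..c+r}|lborel. h (2*c-y)) = (LINT y:{c-r..c+r}|lborel. h y)"
    unfolding set_lebesgue_integral_def
    using lborel_integral_real_affine[of "-1" ?k "2*c"] eq by simp
qed

lemma green_refl: "green x (2*b - y) + green (2*b - x) (2*b - y) - green x y - green (2*b - x) y = 2*b*(y-b)/pi"
proof -
  have "\<bar>x - (2*b-y)\<bar> = \<bar>(2*b-x) - y\<bar>" "\<bar>(2*b-x) - (2*b-y)\<bar> = \<bar>x - y\<bar>" by linarith+
  then show ?thesis unfolding green_def by (simp add: field_simps)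
qed



lemma green_meas[measurable]: "(\<lambda>y. green x y) \<in> borel_measurable borel"
  unfolding green_def by measurable
lemma polar_meas[measurable]:
  assumes [measurable]: "f \<in> borel_measurable borel"
  shows "polar b f \<in> borel_measurable borel"
  unfolding polar_def by measurable


lemma green_bound: "x \<in> {-pi..pi} \<Longrightarrow> y \<in> {-pi..pi} \<Longrightarrow> \<bar>green x y\<bar> \<le> 2*pi"
proof -
  assume x: "x \<in> {-pi..pi}" and y: "y \<in> {-pi..pi}"
  define t where "t = x*y/(2*pi)"
  define a where "a = \<bar>x - y\<bar>"
  have "\<bar>x*y\<bar> \<le> pi*pi" using x y by (simp add: abs_mult mult_mono' abs_le_iff) 
  hence "\<bar>t\<bar> \<le> pi/2" unfolding t_def by (simp add: field_simps)
  hence t: "t \<le> pi/2" "-t \<le> pi/2" by (rule abs_le_D1, rule abs_le_D2)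
  have d: "a \<le> 2*pi" "0 \<le> a" using x y unfolding a_def by auto
  have g: "green x y = -t - a/2 + pi/2" by (simp add: green_def t_def a_def)
  show ?thesis unfolding g apply (rule abs_leI) using t d pi_gt_zero by linarith+
qed




lemma G1: "green (2*b-x) (2*b-y) - green x y = b*(x+y-2*b)/pi"
proof -
  have "\<bar>(2*b-x) - (2*b-y)\<bar> = \<bar>x - y\<bar>" by linarith
  then show ?thesis unfolding green_def by (simp add: field_simps)
qed

lemma G2: "green (2*b-x) (2*b-y) + green (2*b-x) y - green x y - green x (2*b-y) = 2*b*(x-b)/pi"
proof -
  have "\<bar>(2*b-x) - (2*b-y)\<bar> = \<bar>x - y\<bar>" "\<bar>(2*b-x) - y\<bar> = \<bar>x - (2*b-y)\<bar>" by linarith+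
  then show ?thesis unfolding green_def by (simp add: field_simps)
qed

lemma green_alt: "green x y = (pi - max x y) * (pi + min x y) / (2*pi)"
  unfolding green_def by (cases "x \<le> y") (auto simp: field_simps max_def min_def abs_if)

lemma G0: "-pi \<le> y \<Longrightarrow> y \<le> x' \<Longrightarrow> x' \<le> x \<Longrightarrow> green x y \<le> green x' y"
proof -
  assume a: "-pi \<le> y" "y \<le> x'" "x' \<le> x"
  have "(pi - x) * (pi + y) \<le> (pi - x') * (pi + y)" using a by (intro mult_right_mono) auto
  moreover have "max x y = x" "min x y = y" "max x' y = x'" "min x' y = y" using a by auto
  ultimately show ?thesis unfolding green_alt by (simp add: divide_right_mono)
qed

lemma G3:
  assumes "0 < b" "b \<le> x" "x \<le> pi" "b \<le> y" "y \<le> pi"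
  shows "green x (2*b-y) \<le> green (2*b-x) (2*b-y)"
proof -
  have e: "\<bar>x - (2*b-y)\<bar> = x+y-2*b" "\<bar>(2*b-x) - (2*b-y)\<bar> = \<bar>x - y\<bar>" using assms by auto
  have D: "green (2*b-x) (2*b-y) - green x (2*b-y) = ((2*b-y)*(x-b) - pi*(\<bar>x-y\<bar> - (x+y-2*b))/2)/pi"
    unfolding green_def e by (simp add: field_simps)
  have "0 \<le> (2*b-y)*(x-b) - pi*(\<bar>x-y\<bar> - (x+y-2*b))/2"
  proof (cases "y \<le> x")
    case True
    have p1: "(y-b)*(x-b) \<le> (y-b)*pi" using assms by (intro mult_left_mono) auto
    have p2: "0 \<le> b*(x-b)" using assms by auto
    have "\<bar>x-y\<bar> = x - y" using True by auto
    hence "(2*b-y)*(x-b) - pi*(\<bar>x-y\<bar> - (x+y-2*b))/2 = b*(x-b) - (y-b)*(x-b) + (y-b)*pi"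
      by (simp add: field_simps)
    thus ?thesis using p1 p2 by linarith
  next
    case False
    have "\<bar>x-y\<bar> = y - x" using False by auto
    hence "(2*b-y)*(x-b) - pi*(\<bar>x-y\<bar> - (x+y-2*b))/2 = (x-b)*(2*b-y+pi)" by (simp add: field_simps)
    moreover have "0 \<le> (x-b)*(2*b-y+pi)" using assms by auto
    ultimately show ?thesis by simp
  qed
  then show ?thesis using D by (smt (verit) divide_nonneg_pos pi_gt_zero)
qed

lemma G4w:
  assumes "0 < b" "-pi \<le> x" "x \<le> b" "b \<le> y" "y \<le> pi"
  shows "green x (2*b-y) - green x y = (if x \<le> 2*b-y then (y-b)*(x+pi)/pi else (x*(y-b) - pi*(x-b))/pi)"
proof -
  have e: "\<bar>x - y\<bar> = y - x" using assms by auto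
  show ?thesis
  proof (cases "x \<le> 2*b-y")
    case True
    hence "\<bar>x - (2*b-y)\<bar> = 2*b-y-x" by auto
    thus ?thesis using True unfolding green_def e by (simp add: field_simps)
  next
    case False
    hence "\<bar>x - (2*b-y)\<bar> = x-(2*b-y)" by auto
    thus ?thesis using False unfolding green_def e by (simp add: field_simps)
  qed
qed

lemma G4:
  assumes "0 < b" "-pi \<le> x" "x \<le> b" "b \<le> y" "y \<le> pi"
  shows "green x y \<le> green x (2*b-y)"
    and "-pi < x \<Longrightarrow> b < y \<Longrightarrow> y < pi \<Longrightarrow> green x y < green x (2*b-y)"
proof -
  have w: "green x (2*b-y) - green x y = (if x \<le> 2*b-y then (y-b)*(x+pi)/pi else (x*(y-b) - pi*(x-b))/pi)"
    by (rule G4w[OF assms])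
  have A: "0 \<le> x*(y-b) - pi*(x-b)" and B: "-pi < x \<Longrightarrow> b < y \<Longrightarrow> y < pi \<Longrightarrow> 0 < x*(y-b) - pi*(x-b)"
    if "\<not> x \<le> 2*b-y"
  proof -
    (* linear in x on [2b-y, b]; value at b is b(y-b), at 2b-y is (y-b)(2b-y+pi) *)
    have q1: "x*(y-b) - pi*(x-b) = (b - x)*(pi - (y - b)) + b*(y-b)" by (simp add: algebra_simps)
    have q2: "0 \<le> (b - x)*(pi - (y - b))" using assms by auto
    have q3: "0 \<le> b*(y-b)" using assms by auto
    show "0 \<le> x*(y-b) - pi*(x-b)" using q1 q2 q3 by linarith
    assume "-pi < x" "b < y" "y < pi"
    hence "0 < b*(y-b)" using assms by auto
    with q1 q2 show "0 < x*(y-b) - pi*(x-b)" by linarith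
  qed
  show "green x y \<le> green x (2*b-y)"
  proof (cases "x \<le> 2*b-y")
    case True
    have "0 \<le> (y-b)*(x+pi)/pi" using assms by auto
    thus ?thesis using w True by simp
  next
    case False
    thus ?thesis using w divide_nonneg_pos[OF A[OF False] pi_gt_zero] by simp
  qed
  assume h: "-pi < x" "b < y" "y < pi"
  show "green x y < green x (2*b-y)"
  proof (cases "x \<le> 2*b-y")
    case True
    have "0 < (y-b)*(x+pi)/pi" using assms h by auto
    thus ?thesis using w True by simp
  next
    case False
    thus ?thesis using w divide_pos_pos[OF B[OF False h] pi_gt_zero] by simp
  qed
qed




lemma upot_int:
  assumes "set_integrable lborel {-pi..pi} g" "g \<in> borel_measurable borel" "x \<in> {-pi..pi}"
  shows "set_integrable lborel {-pi..pi} (\<lambda>y. green x y * g y)"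
proof (rule set_integrable_bound[where f="\<lambda>y. 2*pi * g y"])
  show "set_integrable lborel {-pi..pi} (\<lambda>y. 2*pi * g y)" using assms(1) by simp
  show "set_borel_measurable lborel {-pi..pi} (\<lambda>y. green x y * g y)"
    unfolding set_borel_measurable_def using assms(2) by measurable
  show "AE y in lborel. y \<in> {-pi..pi} \<longrightarrow> norm (green x y * g y) \<le> norm (2*pi * g y)"
  proof (intro AE_I2 impI)
    fix y assume y: "y \<in> {-pi..pi}"
    have "\<bar>green x y\<bar> * \<bar>g y\<bar> \<le> 2*pi * \<bar>g y\<bar>"
      using green_bound[OF assms(3) y] by (intro mult_right_mono) auto
    thus "norm (green x y * g y) \<le> norm (2*pi * g y)" by (simp add: abs_mult)
  qed
qed

lemma pairing:
  fixes \<Phi> :: "real \<Rightarrow> real"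
  assumes b: "0 < b" "b < pi" and fi: "set_integrable lborel {-pi..pi} \<Phi>"
  shows "(LINT y:{-pi..pi}|lborel. \<Phi> y) = (LINT y:{-pi..<2*b-pi}|lborel. \<Phi> y)
           + (LINT y:{2*b-pi..pi}|lborel. \<Phi> y + \<Phi> (2*b-y)) / 2"
    and "set_integrable lborel {2*b-pi..pi} (\<lambda>y. \<Phi> y + \<Phi> (2*b-y))"
    and "set_integrable lborel {-pi..<2*b-pi} \<Phi>"
proof -
  have T: "{2*b-pi..pi} = {b-(pi-b)..b+(pi-b)}" by simp
  have iT: "set_integrable lborel {2*b-pi..pi} \<Phi>"
    by (rule set_integrable_subset[OF fi]) (use b in auto)
  show iL: "set_integrable lborel {-pi..<2*b-pi} \<Phi>"
    by (rule set_integrable_subset[OF fi]) (use b in auto)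
  have iT': "set_integrable lborel {2*b-pi..pi} (\<lambda>y. \<Phi> (2*b-y))"
    and eT: "(LINT y:{2*b-pi..pi}|lborel. \<Phi> (2*b-y)) = (LINT y:{2*b-pi..pi}|lborel. \<Phi> y)"
    using refl_int[of b "pi-b" \<Phi>] iT unfolding T by auto
  show "set_integrable lborel {2*b-pi..pi} (\<lambda>y. \<Phi> y + \<Phi> (2*b-y))"
    using iT iT' by (rule set_integral_add)
  have sum: "(LINT y:{2*b-pi..pi}|lborel. \<Phi> y + \<Phi> (2*b-y)) = 2 * (LINT y:{2*b-pi..pi}|lborel. \<Phi> y)"
    using set_integral_add(2)[OF iT iT'] eT by simp
  have U: "{-pi..pi} = {-pi..<2*b-pi} \<union> {2*b-pi..pi}" using b by auto
  have "(LINT y:{-pi..pi}|lborel. \<Phi> y) = (LINT y:{-pi..<2*b-pi}|lborel. \<Phi> y) + (LINT y:{2*b-pi..pi}|lborel. \<Phi> y)"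
    unfolding U by (rule set_integral_Un) (use iL iT in auto)
  thus "(LINT y:{-pi..pi}|lborel. \<Phi> y) = (LINT y:{-pi..<2*b-pi}|lborel. \<Phi> y)
           + (LINT y:{2*b-pi..pi}|lborel. \<Phi> y + \<Phi> (2*b-y)) / 2" using sum by simp
qed

lemma pair_sym:
  assumes "0 < b" "b < pi" "\<And>y. y \<in> {b..pi} \<Longrightarrow> 0 \<le> \<Phi> y + \<Phi> (2*b-y)" "y \<in> {2*b-pi..pi}"
  shows "0 \<le> (\<Phi> y + \<Phi> (2*b-y) :: real)"
proof (cases "b \<le> y")
  case True thus ?thesis using assms by auto
next
  case False
  hence "2*b-y \<in> {b..pi}" using assms by auto
  from assms(3)[OF this] show ?thesis by (simp add: add.commute)
qed

lemma pair_nonneg: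
  fixes \<Phi> :: "real \<Rightarrow> real"
  assumes b: "0 < b" "b < pi" and fi: "set_integrable lborel {-pi..pi} \<Phi>"
    and L: "\<And>y. y \<in> {-pi..<2*b-pi} \<Longrightarrow> 0 \<le> \<Phi> y"
    and R: "\<And>y. y \<in> {b..pi} \<Longrightarrow> 0 \<le> \<Phi> y + \<Phi> (2*b-y)"
  shows "0 \<le> (LINT y:{-pi..pi}|lborel. \<Phi> y)"
proof -
  note P = pairing[OF b fi]
  have "0 \<le> (LINT y:{-pi..<2*b-pi}|lborel. \<Phi> y)"
    using set_integral_mono[OF _ P(3), of "\<lambda>_. 0"] L by (simp add: set_integrable_def)
  moreover have "0 \<le> (LINT y:{2*b-pi..pi}|lborel. \<Phi> y + \<Phi> (2*b-y))"
    using set_integral_mono[OF _ P(2), of "\<lambda>_. 0"] pair_sym[of b \<Phi>, OF b R] by (simp add: set_integrable_def)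
  ultimately show ?thesis unfolding P(1) by simp
qed

lemma pair_zero:
  fixes \<Phi> :: "real \<Rightarrow> real"
  assumes b: "0 < b" "b < pi" and fi: "set_integrable lborel {-pi..pi} \<Phi>"
    and L: "\<And>y. y \<in> {-pi..<2*b-pi} \<Longrightarrow> \<Phi> y = 0"
    and R: "\<And>y. y \<in> {b..pi} \<Longrightarrow> 0 \<le> \<Phi> y + \<Phi> (2*b-y)"
    and Z: "(LINT y:{-pi..pi}|lborel. \<Phi> y) = 0"
  shows "AE y in lborel. y \<in> {2*b-pi..pi} \<longrightarrow> \<Phi> y + \<Phi> (2*b-y) = 0"
proof -
  note P = pairing[OF b fi]
  have "(LINT y:{-pi..<2*b-pi}|lborel. \<Phi> y) = (LINT y:{-pi..<2*b-pi}|lborel. 0)"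
    by (rule set_lebesgue_integral_cong) (use L in auto)
  hence "(LINT y:{2*b-pi..pi}|lborel. \<Phi> y + \<Phi> (2*b-y)) = 0" using P(1) Z by simp
  hence "integral\<^sup>L lborel (\<lambda>y. indicator {2*b-pi..pi} y *\<^sub>R (\<Phi> y + \<Phi> (2*b-y))) = 0"
    by (simp add: set_lebesgue_integral_def)
  moreover have "integrable lborel (\<lambda>y. indicator {2*b-pi..pi} y *\<^sub>R (\<Phi> y + \<Phi> (2*b-y)))"
    using P(2) by (simp add: set_integrable_def)
  moreover have "AE y in lborel. 0 \<le> indicator {2*b-pi..pi} y *\<^sub>R (\<Phi> y + \<Phi> (2*b-y))"
    using pair_sym[of b \<Phi>, OF b R] by (intro AE_I2) (auto simp: indicator_def)
  ultimately have "AE y in lborel. indicator {2*b-pi..pi} y *\<^sub>R (\<Phi> y + \<Phi> (2*b-y)) = 0"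
    using integral_nonneg_eq_0_iff_AE by blast
  thus ?thesis by (rule AE_mp) (intro AE_I2, auto simp: indicator_def)
qed




lemma lin4:
  fixes a b c d :: "'x \<Rightarrow> real"
  assumes "set_integrable M A a" "set_integrable M A b" "set_integrable M A c" "set_integrable M A d"
  shows "set_integrable M A (\<lambda>y. a y + b y - c y - d y)"
    and "(LINT y:A|M. a y + b y - c y - d y) = (LINT y:A|M. a y) + (LINT y:A|M. b y) - (LINT y:A|M. c y) - (LINT y:A|M. d y)"
  using assms by (simp_all add: set_integral_add set_integral_diff)

lemma lin2:
  fixes a c :: "'x \<Rightarrow> real"
  assumes "set_integrable M A a" "set_integrable M A c"
  shows "set_integrable M A (\<lambda>y. a y - c y)"
    and "(LINT y:A|M. a y - c y) = (LINT y:A|M. a y) - (LINT y:A|M. c y)"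
  using assms by (simp_all add: set_integral_diff)

locale core =
  fixes f :: "real \<Rightarrow> real" and b :: real
  assumes fm[measurable]: "f \<in> borel_measurable borel"
    and fi: "set_integrable lborel {-pi..pi} f"
    and f0: "\<And>y. 0 \<le> f y"
    and b: "0 < b" "b < pi"
begin

abbreviation "H \<equiv> polar b f"

lemma Hm[measurable]: "H \<in> borel_measurable borel" by (rule polar_meas[OF fm])

lemma pL: "y \<in> {-pi..<2*b-pi} \<Longrightarrow> H y = f y"
  using b unfolding polar_def by auto

lemma pM: "2*b-pi \<le> y \<Longrightarrow> y \<le> b \<Longrightarrow> H y = max (f y) (f (2*b-y))"
  using b unfolding polar_def by auto

lemma pR: "b \<le> y \<Longrightarrow> y \<le> pi \<Longrightarrow> H y = min (f y) (f (2*b-y))"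
proof (cases "y = b")
  case True thus ?thesis using pM[of y] b by simp
next
  case False
  assume "b \<le> y" "y \<le> pi"
  thus ?thesis using False b unfolding polar_def by auto
qed

lemma H0: "0 \<le> H y"
  unfolding polar_def using f0 by (auto simp: le_max_iff_disj)

lemma Hi: "set_integrable lborel {-pi..pi} H"
proof -
  have iL: "set_integrable lborel {-pi..<2*b-pi} H"
  proof -
    have "set_integrable lborel {-pi..<2*b-pi} f"
      by (rule set_integrable_subset[OF fi]) (use b in auto)
    moreover have "set_integrable lborel {-pi..<2*b-pi} H = set_integrable lborel {-pi..<2*b-pi} f"
      by (rule set_integrable_cong) (auto simp: pL)
    ultimately show ?thesis by simp
  qed
  have iT: "set_integrable lborel {2*b-pi..pi} H"
  proof (rule set_integrable_bound[where f="\<lambda>y. f y + f (2*b-y)"])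
    show "set_integrable lborel {2*b-pi..pi} (\<lambda>y. f y + f (2*b-y))"
      by (rule pairing(2)[OF b fi])
    show "set_borel_measurable lborel {2*b-pi..pi} H"
      unfolding set_borel_measurable_def by measurable
    show "AE y in lborel. y \<in> {2*b-pi..pi} \<longrightarrow> norm (H y) \<le> norm (f y + f (2*b-y))"
    proof (intro AE_I2 impI)
      fix y assume y: "y \<in> {2*b-pi..pi}"
      have "H y \<le> f y + f (2*b-y)"
      proof (cases "y \<le> b")
        case True thus ?thesis using pM[of y] y f0[of y] f0[of "2*b-y"] by auto
      next
        case False thus ?thesis using pR[of y] y f0[of y] f0[of "2*b-y"] by auto
      qed
      thus "norm (H y) \<le> norm (f y + f (2*b-y))" using H0[of y] f0[of y] f0[of "2*b-y"] by simp
    qed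
  qed
  have U: "{-pi..pi} = {-pi..<2*b-pi} \<union> {2*b-pi..pi}" using b by auto
  show ?thesis unfolding U by (rule set_integrable_Un[OF iL iT]) auto
qed

lemma gi: "x \<in> {-pi..pi} \<Longrightarrow> set_integrable lborel {-pi..pi} (\<lambda>y. green x y * f y)"
  by (rule upot_int[OF fi fm])
lemma gHi: "x \<in> {-pi..pi} \<Longrightarrow> set_integrable lborel {-pi..pi} (\<lambda>y. green x y * H y)"
  by (rule upot_int[OF Hi Hm])

lemma partA:
  assumes x: "x \<in> {b..pi}"
  shows "upot f x + upot f (2*b - x) \<le> upot H x + upot H (2*b - x)"
proof -
  define x' where "x' = 2*b - x"
  have xS: "x \<in> {-pi..pi}" and x'S: "x' \<in> {-pi..pi}" using x b by (auto simp: x'_def)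
  define \<Phi> where "\<Phi> y = green x y * H y + green x' y * H y - green x y * f y - green x' y * f y" for y
  have eq: "(LINT y:{-pi..pi}|lborel. \<Phi> y) = upot H x + upot H x' - upot f x - upot f x'"
    unfolding \<Phi>_def upot_def by (rule lin4(2)[OF gHi[OF xS] gHi[OF x'S] gi[OF xS] gi[OF x'S]])
  have int: "set_integrable lborel {-pi..pi} \<Phi>"
    unfolding \<Phi>_def by (rule lin4(1)[OF gHi[OF xS] gHi[OF x'S] gi[OF xS] gi[OF x'S]])
  have "0 \<le> (LINT y:{-pi..pi}|lborel. \<Phi> y)"
  proof (rule pair_nonneg[OF b int])
    fix y assume "y \<in> {-pi..<2*b-pi}"
    thus "0 \<le> \<Phi> y" unfolding \<Phi>_def by (simp add: pL)
  next
    fix y assume y: "y \<in> {b..pi}"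
    define y' where "y' = 2*b - y"
    define m where "m = min (f y) (f y')"
    have Hy: "H y = m" using pR[of y] y by (simp add: m_def y'_def)
    have Hy': "H y' = f y + f y' - m" using pM[of y'] y b by (auto simp: m_def y'_def)
    define A where "A = green x y + green x' y"
    define B where "B = green x y' + green x' y'"
    have BA: "B - A = 2*b*(y-b)/pi" unfolding A_def B_def x'_def y'_def using green_refl[of x b y] by simp
    have "\<Phi> y + \<Phi> y' = (B - A) * (f y - m)"
      unfolding \<Phi>_def Hy Hy' A_def B_def by (simp add: algebra_simps)
    moreover have "0 \<le> B - A" using BA b y by auto
    moreover have "0 \<le> f y - m" by (simp add: m_def)
    ultimately show "0 \<le> \<Phi> y + \<Phi> (2*b - y)" by (simp add: y'_def)
  qed
  thus ?thesis using eq by (simp add: x'_def)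
qed

lemma partB:
  assumes x: "x \<in> {b..pi}"
  shows "upot f x \<le> upot H (2*b - x)"
proof -
  define x' where "x' = 2*b - x"
  have xS: "x \<in> {-pi..pi}" and x'S: "x' \<in> {-pi..pi}" using x b by (auto simp: x'_def)
  define \<Phi> where "\<Phi> y = green x' y * H y - green x y * f y" for y
  have eq: "(LINT y:{-pi..pi}|lborel. \<Phi> y) = upot H x' - upot f x"
    unfolding \<Phi>_def upot_def by (rule lin2(2)[OF gHi[OF x'S] gi[OF xS]])
  have int: "set_integrable lborel {-pi..pi} \<Phi>"
    unfolding \<Phi>_def by (rule lin2(1)[OF gHi[OF x'S] gi[OF xS]])
  have "0 \<le> (LINT y:{-pi..pi}|lborel. \<Phi> y)"
  proof (rule pair_nonneg[OF b int])
    fix y assume y: "y \<in> {-pi..<2*b-pi}"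
    have "green x y \<le> green x' y" using y x by (intro G0) (auto simp: x'_def)
    hence "0 \<le> (green x' y - green x y) * f y" using f0[of y] by simp
    thus "0 \<le> \<Phi> y" unfolding \<Phi>_def by (simp add: pL[OF y] algebra_simps)
  next
    fix y assume y: "y \<in> {b..pi}"
    define y' where "y' = 2*b - y"
    have Hy: "H y = min (f y) (f y')" using pR[of y] y by (simp add: y'_def)
    have Hy': "H y' = max (f y) (f y')" using pM[of y'] y b by (auto simp: y'_def)
    define a where "a = green x y"
    define c where "c = green x y'"
    define a' where "a' = green x' y'"
    define c' where "c' = green x' y"
    have g1: "0 \<le> a' - a" unfolding a'_def a_def x'_def y'_def using G1[of b x y] b x y by auto
    have g2: "0 \<le> a' + c' - a - c" unfolding a'_def a_def c_def c'_def x'_def y'_def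
      using G2[of b x y] b x y by auto
    have g3: "0 \<le> a' - c" unfolding a'_def c_def x'_def y'_def using G3[of b x y] b x y by auto
    have P: "\<Phi> y + \<Phi> y' = c' * min (f y) (f y') + a' * max (f y) (f y') - a * f y - c * f y'"
      unfolding \<Phi>_def Hy Hy' a_def c_def a'_def c'_def by simp
    show "0 \<le> \<Phi> y + \<Phi> (2*b - y)"
    proof (cases "f y \<le> f y'")
      case True
      have "\<Phi> y + \<Phi> y' = (a' + c' - a - c) * f y + (a' - c) * (f y' - f y)"
        unfolding P using True by (simp add: algebra_simps)
      moreover have "0 \<le> (a' + c' - a - c) * f y" using g2 f0[of y] by simp
      moreover have "0 \<le> (a' - c) * (f y' - f y)" using g3 True by simp
      ultimately show ?thesis by (simp add: y'_def)
    next
      case False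
      have "\<Phi> y + \<Phi> y' = (a' + c' - a - c) * f y' + (a' - a) * (f y - f y')"
        unfolding P using False by (simp add: algebra_simps)
      moreover have "0 \<le> (a' + c' - a - c) * f y'" using g2 f0[of y'] by simp
      moreover have "0 \<le> (a' - a) * (f y - f y')" using g1 False by simp
      ultimately show ?thesis by (simp add: y'_def)
    qed
  qed
  thus ?thesis using eq by (simp add: x'_def)
qed

definition "Phic x y = green x y * H y - green x y * f y"

lemma Phic_int: "x \<in> {-pi..pi} \<Longrightarrow> set_integrable lborel {-pi..pi} (Phic x)"
  using lin2(1)[OF gHi gi] unfolding Phic_def by blast

lemma Phic_eq: "x \<in> {-pi..pi} \<Longrightarrow> (LINT y:{-pi..pi}|lborel. Phic x y) = upot H x - upot f x"
  unfolding Phic_def upot_def by (rule lin2(2)[OF gHi gi])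

lemma Phic_L: "y \<in> {-pi..<2*b-pi} \<Longrightarrow> Phic x y = 0"
  unfolding Phic_def by (simp add: pL)

lemma Phic_R:
  assumes y: "y \<in> {b..pi}"
  shows "Phic x y + Phic x (2*b-y) = (green x (2*b-y) - green x y) * (f y - min (f y) (f (2*b-y)))"
proof -
  define y' where "y' = 2*b - y"
  have Hy: "H y = min (f y) (f y')" using pR[of y] y by (simp add: y'_def)
  have Hy': "H y' = f y + f y' - min (f y) (f y')" using pM[of y'] y b by (auto simp: y'_def)
  show ?thesis unfolding Phic_def y'_def[symmetric] Hy Hy' by (simp add: algebra_simps)
qed

lemma Phic_R_nonneg:
  assumes x: "x \<in> {-pi..b}" and y: "y \<in> {b..pi}"
  shows "0 \<le> Phic x y + Phic x (2*b-y)"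
  unfolding Phic_R[OF y] using G4(1)[of b x y] b x y by (intro mult_nonneg_nonneg) auto

lemma partC:
  assumes x: "x \<in> {-pi..b}"
  shows "upot f x \<le> upot H x"
proof -
  have xS: "x \<in> {-pi..pi}" using x b by auto
  have "0 \<le> (LINT y:{-pi..pi}|lborel. Phic x y)"
    by (rule pair_nonneg[OF b Phic_int[OF xS]]) (auto simp: Phic_L Phic_R_nonneg[OF x])
  thus ?thesis using Phic_eq[OF xS] by simp
qed

lemma partE1:
  assumes x: "x \<in> {-pi<..b}" and eq: "upot f x = upot H x"
  shows "AE y in lborel. y \<in> {-pi..pi} \<longrightarrow> f y = H y"
proof -
  have xS: "x \<in> {-pi..pi}" and xJ: "x \<in> {-pi..b}" using x b by auto
  have Z: "(LINT y:{-pi..pi}|lborel. Phic x y) = 0" using Phic_eq[OF xS] eq by simp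
  have AE1: "AE y in lborel. y \<in> {2*b-pi..pi} \<longrightarrow> Phic x y + Phic x (2*b-y) = 0"
    by (rule pair_zero[OF b Phic_int[OF xS] _ _ Z]) (auto simp: Phic_L Phic_R_nonneg[OF xJ])
  have pos: "0 < green x (2*b-z) - green x z" if z: "b < z" "z < pi" for z
    using G4(2)[of b x z] b x z by auto
  show ?thesis
    using AE1 AE_lborel_singleton[of "2*b-pi"] AE_lborel_singleton[of b] AE_lborel_singleton[of pi]
  proof eventually_elim
    case (elim y)
    show ?case
    proof
      assume yS: "y \<in> {-pi..pi}"
      show "f y = H y"
      proof (cases "y < 2*b-pi")
        case True thus ?thesis using pL[of y] yS by simp
      next
        case False
        hence yT: "y \<in> {2*b-pi..pi}" using yS by auto
        have z: "Phic x y + Phic x (2*b-y) = 0" using elim yT by simp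
        show ?thesis
        proof (cases "b < y")
          case True
          have "y < pi" using elim yS by auto
          have "(green x (2*b-y) - green x y) * (f y - min (f y) (f (2*b-y))) = 0"
            using z Phic_R[of y x] True yS by simp
          hence "f y = min (f y) (f (2*b-y))" using pos[OF True \<open>y < pi\<close>] by simp
          thus ?thesis using pR[of y] True yS by simp
        next
          case False
          define y' where "y' = 2*b-y"
          have y'1: "b < y'" "y' < pi" using False elim yT by (auto simp: y'_def)
          have "Phic x y' + Phic x (2*b-y') = 0" using z by (simp add: y'_def add.commute)
          hence "(green x (2*b-y') - green x y') * (f y' - min (f y') (f (2*b-y'))) = 0"
            using Phic_R[of y' x] y'1 by simp
          hence "f y' = min (f y') (f y)" using pos[OF y'1] by (simp add: y'_def)
          thus ?thesis using pM[of y] False yT by (simp add: y'_def[symmetric])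
        qed
      qed
    qed
  qed
qed

lemma partE2:
  assumes xS: "x \<in> {-pi..pi}" and ae: "AE y in lborel. y \<in> {-pi..pi} \<longrightarrow> f y = H y"
  shows "upot f x = upot H x"
proof -
  have "(LINT y:{-pi..pi}|lborel. Phic x y) = (LINT y:{-pi..pi}|lborel. 0)"
  proof (rule set_lebesgue_integral_cong_AE)
    show "Phic x \<in> borel_measurable lborel" unfolding Phic_def by measurable
    show "AE y\<in>{-pi..pi} in lborel. Phic x y = 0" using ae by eventually_elim (simp add: Phic_def)
  qed auto
  thus ?thesis using Phic_eq[OF xS] by simp
qed

end



lemma main_pos:
  fixes f :: "real \<Rightarrow> real" and b :: real
  assumes fm: "f \<in> borel_measurable borel" and fi: "set_integrable lborel {-pi..pi} f"
    and f0: "\<And>y. 0 \<le> f y" and b: "0 < b" "b < pi"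
  shows "(\<forall>x\<in>{b..pi}. upot f x + upot f (2*b - x) \<le> upot (polar b f) x + upot (polar b f) (2*b - x))
    \<and> (\<forall>x\<in>{b..pi}. upot f x \<le> upot (polar b f) (2*b - x))
    \<and> (\<forall>x\<in>{-pi..b}. upot f x \<le> upot (polar b f) x)
    \<and> ((\<exists>x\<in>{-pi<..b}. upot f x = upot (polar b f) x) \<longleftrightarrow> (\<forall>x\<in>{-pi<..b}. upot f x = upot (polar b f) x))
    \<and> ((\<forall>x\<in>{-pi<..b}. upot f x = upot (polar b f) x) \<longleftrightarrow> (\<forall>x\<in>{-pi..pi}. upot f x = upot (polar b f) x))
    \<and> ((\<forall>x\<in>{-pi..pi}. upot f x = upot (polar b f) x) \<longleftrightarrow>
           (AE x in lborel. x \<in> {-pi..pi} \<longrightarrow> f x = polar b f x))"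
proof -
  interpret core f b using assms by unfold_locales auto
  have bJ: "b \<in> {-pi<..b}" using b by auto
  have sub: "{-pi<..b} \<subseteq> {-pi..pi}" using b by auto
  show ?thesis
    using partA partB partC partE1 partE2 bJ sub by blast
qed




lemma green_neg: "green (-x) y = green x (-y)"
  unfolding green_def by (simp add: abs_minus_commute)

lemma upot_refl: "upot g x = upot (\<lambda>y. g (-y)) (-x)"
proof -
  have "upot g x = (LBINT y:{y. -y \<in> {-pi..pi}}. green x (-y) * g (-y))"
    unfolding upot_def by (rule set_integral_reflect)
  also have "{y. -y \<in> {-pi..pi}} = {-pi..pi::real}" by auto
  finally show ?thesis unfolding upot_def by (simp add: green_neg)
qed

lemma polar_neg:
  assumes "b < 0" "-pi < b"
  shows "polar b g (-y) = polar (-b) (\<lambda>y. g (-y)) y"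
proof (cases "y = -b")
  case True thus ?thesis using assms unfolding polar_def by auto
next
  case False thus ?thesis using assms unfolding polar_def by (auto simp: max.commute min.commute add.commute)
qed

lemma AE_neg:
  fixes P :: "real \<Rightarrow> bool"
  assumes "{x. P x} \<in> sets borel"
  shows "(AE x in lborel. P x) \<longleftrightarrow> (AE x in lborel. P (-x))"
proof -
  have "(AE x in lborel. P x) \<longleftrightarrow> (AE x in distr lborel borel uminus. P x)"
    by (simp only: lborel_distr_uminus)
  also have "\<dots> \<longleftrightarrow> (AE x in lborel. P (-x))"
    by (rule AE_distr_iff) (use assms in auto)
  finally show ?thesis .
qed

lemma main_borel:
  fixes f :: "real \<Rightarrow> real" and b :: real
  assumes fm[measurable]: "f \<in> borel_measurable borel" and fi: "set_integrable lborel {-pi..pi} f"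
    and f0: "\<And>y. 0 \<le> f y" and b_range: "-pi < b" "b < pi" "b \<noteq> 0"
  defines "I \<equiv> (if 0 < b then {b..pi} else {-pi..b})"
    and "J \<equiv> (if 0 < b then {-pi..b} else {b..pi})"
    and "J' \<equiv> (if 0 < b then {-pi<..b} else {b..<pi})"
  shows "(\<forall>x\<in>I. upot f x + upot f (2*b - x) \<le> upot (polar b f) x + upot (polar b f) (2*b - x))
    \<and> (\<forall>x\<in>I. upot f x \<le> upot (polar b f) (2*b - x))
    \<and> (\<forall>x\<in>J. upot f x \<le> upot (polar b f) x)
    \<and> ((\<exists>x\<in>J'. upot f x = upot (polar b f) x) \<longleftrightarrow> (\<forall>x\<in>J'. upot f x = upot (polar b f) x))
    \<and> ((\<forall>x\<in>J'. upot f x = upot (polar b f) x) \<longleftrightarrow> (\<forall>x\<in>{-pi..pi}. upot f x = upot (polar b f) x))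
    \<and> ((\<forall>x\<in>{-pi..pi}. upot f x = upot (polar b f) x) \<longleftrightarrow>
           (AE x in lborel. x \<in> {-pi..pi} \<longrightarrow> f x = polar b f x))"
proof (cases "0 < b")
  case True
  thus ?thesis using main_pos[OF fm fi f0 True b_range(2)] unfolding I_def J_def J'_def by simp
next
  case False
  hence bn: "b < 0" using b_range by auto
  define g where "g y = f (-y)" for y
  have gm[measurable]: "g \<in> borel_measurable borel" unfolding g_def by measurable
  have gi: "set_integrable lborel {-pi..pi} g"
    using refl_int(1)[of 0 pi f] fi unfolding g_def by simp
  have g0: "\<And>y. 0 \<le> g y" by (simp add: g_def f0)
  note P = main_pos[OF gm gi g0, of "-b"]
  have U1: "upot f x = upot g (-x)" for x unfolding g_def by (rule upot_refl)
  have pn: "polar b f = (\<lambda>y. polar (-b) g (-y))"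
    using polar_neg[OF bn b_range(1), of f] unfolding g_def by (metis minus_minus)
  have U2: "upot (polar b f) x = upot (polar (-b) g) (-x)" for x
    using upot_refl[of "polar b f" x] pn by simp
  have AEeq: "(AE x in lborel. x \<in> {-pi..pi} \<longrightarrow> f x = polar b f x) \<longleftrightarrow>
     (AE x in lborel. x \<in> {-pi..pi} \<longrightarrow> g x = polar (-b) g x)"
  proof -
    have "(AE x in lborel. x \<in> {-pi..pi} \<longrightarrow> f x = polar b f x) \<longleftrightarrow>
       (AE x in lborel. -x \<in> {-pi..pi} \<longrightarrow> f (-x) = polar b f (-x))"
      by (rule AE_neg) measurable
    also have "\<dots> \<longleftrightarrow> (AE x in lborel. x \<in> {-pi..pi} \<longrightarrow> g x = polar (-b) g x)"
      by (intro arg_cong[where f="almost_everywhere lborel"] ext) (auto simp: pn g_def)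
    finally show ?thesis .
  qed
  have I: "I = {-pi..b}" "J = {b..pi}" "J' = {b..<pi}" using bn unfolding I_def J_def J'_def by auto
  have nb: "0 < -b" "-b < pi" using bn b_range by auto
  define u where "u = upot g"
  define v where "v = upot (polar (-b) g)"
  have P': "(\<forall>x\<in>{-b..pi}. u x + u (2*(-b) - x) \<le> v x + v (2*(-b) - x))
    \<and> (\<forall>x\<in>{-b..pi}. u x \<le> v (2*(-b) - x))
    \<and> (\<forall>x\<in>{-pi..-b}. u x \<le> v x)
    \<and> ((\<exists>x\<in>{-pi<..-b}. u x = v x) \<longleftrightarrow> (\<forall>x\<in>{-pi<..-b}. u x = v x))
    \<and> ((\<forall>x\<in>{-pi<..-b}. u x = v x) \<longleftrightarrow> (\<forall>x\<in>{-pi..pi}. u x = v x))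
    \<and> ((\<forall>x\<in>{-pi..pi}. u x = v x) \<longleftrightarrow>
           (AE x in lborel. x \<in> {-pi..pi} \<longrightarrow> g x = polar (-b) g x))"
    using P nb unfolding u_def v_def by simp
  have e1: "- (2 * b - x) = 2 * - b - (-x)" for x :: real by simp
  have c1: "\<forall>x\<in>{-pi..b}. u (-x) + u (- (2*b - x)) \<le> v (-x) + v (- (2*b - x))"
  proof
    fix x assume "x \<in> {-pi..b}" hence "-x \<in> {-b..pi}" by auto
    thus "u (-x) + u (- (2*b - x)) \<le> v (-x) + v (- (2*b - x))" using P' unfolding e1 by blast
  qed
  have c2: "\<forall>x\<in>{-pi..b}. u (-x) \<le> v (- (2*b - x))"
  proof
    fix x assume "x \<in> {-pi..b}" hence "-x \<in> {-b..pi}" by auto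
    thus "u (-x) \<le> v (- (2*b - x))" using P' unfolding e1 by blast
  qed
  have c3: "\<forall>x\<in>{b..pi}. u (-x) \<le> v (-x)"
  proof
    fix x assume "x \<in> {b..pi}" hence "-x \<in> {-pi..-b}" by auto
    thus "u (-x) \<le> v (-x)" using P' by blast
  qed
  have q1: "(\<exists>x\<in>{b..<pi}. u (-x) = v (-x)) \<longleftrightarrow> (\<exists>x\<in>{-pi<..-b}. u x = v x)"
    by (metis (no_types, lifting) greaterThanAtMost_iff atLeastLessThan_iff minus_minus neg_le_iff_le neg_less_iff_less)
  have q2: "(\<forall>x\<in>{b..<pi}. u (-x) = v (-x)) \<longleftrightarrow> (\<forall>x\<in>{-pi<..-b}. u x = v x)"
    by (metis (no_types, lifting) greaterThanAtMost_iff atLeastLessThan_iff minus_minus neg_le_iff_le neg_less_iff_less)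
  have q3: "(\<forall>x\<in>{-pi..pi}. u (-x) = v (-x)) \<longleftrightarrow> (\<forall>x\<in>{-pi..pi}. u x = v x)"
    by (metis atLeastAtMost_iff minus_minus neg_le_iff_le)
  show ?thesis
    unfolding I AEeq U1 U2 u_def[symmetric] v_def[symmetric] q1 q2 q3
    using c1 c2 c3 P' by blast
qed



lemma polar_local:
  assumes y: "y \<in> {-pi..pi}" and b: "-pi < b" "b < pi"
    and e1: "g y = h y" and e2: "2*b-y \<in> {-pi..pi} \<Longrightarrow> g (2*b-y) = h (2*b-y)"
  shows "polar b g y = polar b h y"
proof -
  consider (p1) "0 < b" "y < 2*b-pi" | (p2) "0 < b" "2*b-pi \<le> y" | (n1) "b < 0" "y \<le> 2*b+pi" | (n2) "b < 0" "2*b+pi < y" | (z) "b = 0"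
    by linarith
  thus ?thesis
  proof cases
    case p1 thus ?thesis using y e1 unfolding polar_def by simp
  next
    case p2
    hence "2*b-y \<in> {-pi..pi}" using y b by auto
    thus ?thesis using p2 y e1 e2 unfolding polar_def by simp
  next
    case n1
    hence "2*b-y \<in> {-pi..pi}" using y b by auto
    thus ?thesis using n1 y e1 e2 unfolding polar_def by simp
  next
    case n2 thus ?thesis using y e1 unfolding polar_def by simp
  next
    case z thus ?thesis using e1 unfolding polar_def by simp
  qed
qed

theorem lemma4p3:
  fixes f :: "real \<Rightarrow> real" and b :: real
  assumes f_int: "set_integrable lborel {-pi..pi} f"
    and f_nonneg: "\<And>x. x \<in> {-pi..pi} \<Longrightarrow> 0 \<le> f x"
    and b_range: "-pi < b" "b < pi" "b \<noteq> 0"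
  defines "I \<equiv> (if 0 < b then {b..pi} else {-pi..b})"
    and "J \<equiv> (if 0 < b then {-pi..b} else {b..pi})"
    and "J' \<equiv> (if 0 < b then {-pi<..b} else {b..<pi})"
  shows "(\<forall>x\<in>I. upot f x + upot f (2*b - x) \<le> upot (polar b f) x + upot (polar b f) (2*b - x))
    \<and> (\<forall>x\<in>I. upot f x \<le> upot (polar b f) (2*b - x))
    \<and> (\<forall>x\<in>J. upot f x \<le> upot (polar b f) x)
    \<and> ((\<exists>x\<in>J'. upot f x = upot (polar b f) x) \<longleftrightarrow> (\<forall>x\<in>J'. upot f x = upot (polar b f) x))
    \<and> ((\<forall>x\<in>J'. upot f x = upot (polar b f) x) \<longleftrightarrow> (\<forall>x\<in>{-pi..pi}. upot f x = upot (polar b f) x))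
    \<and> ((\<forall>x\<in>{-pi..pi}. upot f x = upot (polar b f) x) \<longleftrightarrow>
           (AE x in lborel. x \<in> {-pi..pi} \<longrightarrow> f x = polar b f x))"
proof -
  define F where "F y = indicator {-pi..pi} y *\<^sub>R f y" for y
  have Fm: "F \<in> borel_measurable borel"
  proof -
    have "F \<in> borel_measurable lborel"
      using f_int unfolding set_integrable_def F_def by (rule borel_measurable_integrable)
    thus ?thesis by simp
  qed
  have Fe: "y \<in> {-pi..pi} \<Longrightarrow> F y = f y" for y by (simp add: F_def)
  have Fi: "set_integrable lborel {-pi..pi} F"
  proof -
    have "set_integrable lborel {-pi..pi} F = set_integrable lborel {-pi..pi} f"
      by (rule set_integrable_cong) (auto simp: Fe)
    thus ?thesis using f_int by simp
  qed
  have F0: "0 \<le> F y" for y using f_nonneg by (simp add: F_def indicator_def)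
  have pe: "y \<in> {-pi..pi} \<Longrightarrow> polar b f y = polar b F y" for y
    by (rule polar_local) (use b_range Fe in auto)
  have u1: "upot f = upot F"
    unfolding upot_def by (intro ext set_lebesgue_integral_cong) (auto simp: Fe)
  have u2: "upot (polar b f) = upot (polar b F)"
    unfolding upot_def by (intro ext set_lebesgue_integral_cong) (auto simp: pe)
  have ae: "(\<lambda>x. x \<in> {-pi..pi} \<longrightarrow> f x = polar b f x) = (\<lambda>x. x \<in> {-pi..pi} \<longrightarrow> F x = polar b F x)"
    using Fe pe by auto
  show ?thesis
    unfolding u1 u2 ae I_def J_def J'_def
    by (rule main_borel[OF Fm Fi F0 b_range])
qed


end
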